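(* Let $\varepsilon\in[0,1)$ and $M>1$. Let $\mathcal{P},\mathcal{E}\subseteq\mathcal{D}(P)$ satisfy $\operatorname{conv}(\mathcal{P})\cap\operatorname{aff}(\mathcal{E})\neq\emptyset$. Then there exists a linear map $\mathcal{L}$ from operators on $P$ to operators on the qubit $B$ such that $T(\mathcal{L}(\rho),|1\rangle\langle1|)\le\varepsilon$ for all $\rho\in\mathcal{P}$ and $\mathcal{L}(\tau)=\pi_M$ for all $\tau\in\mathcal{E}$ if and only if $\varepsilon\ge 1-1/M$. Moreover, whenever the transformation is achievable, the optimal work extraction is realized by the thermal operation $\mathcal{L}(\cdot)=\operatorname{tr}[\cdot]\,\pi_{1/(1-\varepsilon)}$.
   Context: All Hilbert spaces are finite-dimensional; $\mathcal{D}(P)$ is the set of density operators on $P$; $T(X,Y)=\tfrac12\|X-Y\|_1$. $\operatorname{conv}$ and $\operatorname{aff}$ denote convex and affine hulls. The battery is a qubit $B$ with orthonormal basis $\{|0\rangle,|1\rangle\}$; for $M>1$ its Gibbs state is $\pi_M=(1-\tfrac1M)|0\rangle\langle0|+\tfrac1M|1\rangle\langle1|$, and the excited clean battery is $(|1\rangle\langle1|,\pi_M)$; larger $M$ means more work stored ($\beta\times$work $=\log M$). The conversion described in the claim is the uncertain athermal state conversion $(\mathcal{P},\mathcal{E})\xrightarrow{\mathcal{L},\varepsilon}(|1\rangle\langle1|,\pi_M)$ under Gibbs-preserving linear maps (GPL). A thermal operation is a map of the form $\rho\mapsto\operatorname{tr}_{\text{rest}}[U(\rho\otimes\tau^E)U^\dagger]$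 with $\tau^E$ the Gibbs state of an ancilla and $U$ an energy-conserving unitary. *)

theory Defs
  imports "HOL-Analysis.Analysis"
begin

text \<open>Operators on a finite-dimensional Hilbert space whose orthonormal basis is
  indexed by the finite type 'n are represented as complex matrices of type
  complex^'n^'n (row index first).  The qubit battery B is indexed by type 2.\<close>

type_synonym ('n) op = "complex^'n^'n"

definition adj :: "complex^('n::finite)^('m::finite) \<Rightarrow> complex^'m^'n" where
  "adj A = (\<chi> i j. cnj (A$j$i))"

definition hermitian :: "('n::finite) op \<Rightarrow> bool" where
  "hermitian A \<longleftrightarrow> adj A = A"

definition psd :: "('n::finite) op \<Rightarrow> bool" where
  "psd A \<longleftrightarrow> hermitian A \<and>
     (\<forall>v::complex^'n. 0 \<le> Re (\<Sum>i\<in>UNIV. \<Sum>j\<in>UNIV. cnj (v$i) * A$i$j * v$j))"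

definition density :: "('n::finite) op set" where
  "density = {\<rho>. psd \<rho> \<and> trace \<rho> = 1}"

definition abs_op :: "('n::finite) op \<Rightarrow> 'n op" where
  "abs_op A = (THE S. psd S \<and> S ** S = adj A ** A)"

definition trace_norm :: "('n::finite) op \<Rightarrow> real" where
  "trace_norm A = Re (trace (abs_op A))"

definition trace_dist :: "('n::finite) op \<Rightarrow> 'n op \<Rightarrow> real" where
  "trace_dist X Y = trace_norm (X - Y) / 2"

definition cscale :: "complex \<Rightarrow> complex^('n::finite)^('m::finite) \<Rightarrow> complex^'n^'m" where
  "cscale c X = (\<chi> i j. c * X$i$j)"

definition clinear_op :: "(('n::finite) op \<Rightarrow> ('b::finite) op) \<Rightarrow> bool" where
  "clinear_op L \<longleftrightarrow> (\<forall>X Y. L (X + Y) = L X + L Y) \<and> (\<forall>c X. L (cscale c X) = cscale c (L X))"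

definition ket1bra1 :: "2 op" where
  "ket1bra1 = (\<chi> i j. if i = 1 \<and> j = 1 then 1 else 0)"

definition gibbs_battery :: "real \<Rightarrow> 2 op" where
  "gibbs_battery M = (\<chi> i j. if i = j then (if i = 0 then complex_of_real (1 - 1 / M)
                                              else complex_of_real (1 / M)) else 0)"

definition converts :: "('n::finite) op set \<Rightarrow> 'n op set \<Rightarrow> real \<Rightarrow> real \<Rightarrow> ('n op \<Rightarrow> 2 op) \<Rightarrow> bool" where
  "converts P E eps M L \<longleftrightarrow> clinear_op L \<and>
     (\<forall>\<rho>\<in>P. trace_dist (L \<rho>) ket1bra1 \<le> eps) \<and> (\<forall>\<tau>\<in>E. L \<tau> = gibbs_battery M)"

definition diag_op :: "complex^('n::finite) \<Rightarrow> 'n op" where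
  "diag_op v = (\<chi> i j. if i = j then v$i else 0)"

definition unitary_mat :: "complex^('n::finite)^('m::finite) \<Rightarrow> bool" where
  "unitary_mat U \<longleftrightarrow> U ** adj U = mat 1 \<and> adj U ** U = mat 1"

text \<open>G is the Gibbs state exp(-beta H)/tr exp(-beta H) of the Hamiltonian H
  (matrix exponential via the spectral decomposition of the Hermitian H).\<close>
definition is_gibbs :: "real \<Rightarrow> ('n::finite) op \<Rightarrow> 'n op \<Rightarrow> bool" where
  "is_gibbs beta H G \<longleftrightarrow> hermitian H \<and>
     (\<exists>(V::'n op) (e::real^'n). unitary_mat V \<and>
        H = V ** diag_op (\<chi> i. complex_of_real (e$i)) ** adj V \<and>
        G = V ** diag_op (\<chi> i. complex_of_real (exp (- beta * e$i) / (\<Sum>k\<in>UNIV. exp (- beta * e$k)))) ** adj V)"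

definition kron :: "complex^('a::finite)^('b::finite) \<Rightarrow> complex^('c::finite)^('d::finite) \<Rightarrow> complex^('a \<times> 'c)^('b \<times> 'd)" where
  "kron A B = (\<chi> p q. A$fst p$fst q * B$snd p$snd q)"

definition ptrace2 :: "complex^(('b::finite) \<times> ('r::finite))^('b \<times> 'r) \<Rightarrow> 'b op" where
  "ptrace2 X = (\<chi> b b'. \<Sum>r\<in>UNIV. X$(b,r)$(b',r))"

text \<open>Lambda is a thermal operation at inverse temperature beta from the system with
  Hamiltonian HS (space indexed by 'n) to the system with Hamiltonian HB (indexed by 'b),
  using an ancilla indexed by 'e, the discarded rest being indexed by 'r:
  Lambda(X) = tr_rest[U (X (x) tau^E) U^dagger], tau^E the Gibbs state of the ancilla
  Hamiltonian HE, and U an energy-conserving unitary from S(x)E onto B(x)R, i.e.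
  U (HS (x) 1 + 1 (x) HE) = (HB (x) 1 + 1 (x) HR) U.\<close>
definition thermal_operation ::
  "('e::finite) itself \<Rightarrow> ('r::finite) itself \<Rightarrow> real \<Rightarrow> ('n::finite) op \<Rightarrow> ('b::finite) op \<Rightarrow> ('n op \<Rightarrow> 'b op) \<Rightarrow> bool" where
  "thermal_operation _ _ beta HS HB Lam \<longleftrightarrow>
     (\<exists>(HE::'e op) (HR::'r op) (tauE::'e op) (U::complex^('n \<times> 'e)^('b \<times> 'r)).
        hermitian HS \<and> hermitian HB \<and> hermitian HE \<and> hermitian HR \<and>
        is_gibbs beta HE tauE \<and> unitary_mat U \<and>
        U ** (kron HS (mat 1) + kron (mat 1) HE) = (kron HB (mat 1) + kron (mat 1) HR) ** U \<and>
        (\<forall>X. Lam X = ptrace2 (U ** kron X tauE ** adj U)))"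

end

theory Submission
  imports Defs
begin
lemma two_eq_zero: "(2::2) = 0" by simp
lemma UNIV_2': "(UNIV::2 set) = {0,1}"
  using UNIV_2 two_eq_zero by auto
lemma exhaust2': "(i::2) = 0 \<or> i = 1" using UNIV_2' by auto
lemma sum2: "sum f (UNIV::2 set) = f 0 + f 1" unfolding UNIV_2' by simp

lemma cnjsq: "x * cnj x = complex_of_real ((cmod x)^2)" by (rule complex_norm_square[symmetric])

definition mk2 :: "real \<Rightarrow> complex \<Rightarrow> real \<Rightarrow> 2 op" where
 "mk2 p q r = (\<chi> i j. if i = 0 then (if j = 0 then complex_of_real p else q) else (if j = 0 then cnj q else complex_of_real r))"

lemma mk2_nth[simp]: "mk2 p q r $0$0 = p" "mk2 p q r $0$1 = q" "mk2 p q r $1$0 = cnj q" "mk2 p q r $1$1 = r"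
  by (simp_all add: mk2_def)

lemma mat2_eqI: fixes A B :: "complex^2^2"
  assumes "A$0$0 = B$0$0" "A$0$1 = B$0$1" "A$1$0 = B$1$0" "A$1$1 = B$1$1" shows "A = B"
proof -
  have "\<forall>i j. A$i$j = B$i$j"
  proof (intro allI)
    fix i j :: 2
    show "A$i$j = B$i$j" using exhaust2'[of i] exhaust2'[of j] assms by auto
  qed
  then show ?thesis by (simp add: vec_eq_iff)
qed

lemma herm2: assumes "hermitian S" shows "S = mk2 (Re (S$0$0)) (S$0$1) (Re (S$1$1))"
proof -
  have h: "cnj (S$j$i) = S$i$j" for i j
  proof -
    have "adj S $ i $ j = S $ i $ j" using assms unfolding hermitian_def by simp
    then show ?thesis unfolding adj_def by simp
  qed
  have r: "complex_of_real (Re (S$i$i)) = S$i$i" for i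
  proof -
    have "Im (S$i$i) = 0" using arg_cong[OF h[of i i], of Im] by simp
    then show ?thesis by (simp add: complex_eq_iff)
  qed
  show ?thesis 
    apply (rule mat2_eqI)
    apply (simp only: mk2_nth r)
    apply (simp only: mk2_nth)
    apply (simp add: h)
    apply (simp only: mk2_nth r)
    done
qed

lemma mk2_herm: "hermitian (mk2 p q r)"
  unfolding hermitian_def adj_def by (rule mat2_eqI) simp_all

definition vec2 :: "complex \<Rightarrow> complex \<Rightarrow> complex^2" where
  "vec2 x y = (\<chi> i. if i = 0 then x else y)"

lemma vec2_nth[simp]: "vec2 x y $ 0 = x" "vec2 x y $ 1 = y" by (simp_all add: vec2_def)

lemma qf_mk2: "Re (\<Sum>i\<in>UNIV. \<Sum>j\<in>UNIV. cnj (v$i) * mk2 p q r$i$j * v$j)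
   = p * (cmod (v$0))^2 + r * (cmod (v$1))^2 + 2 * Re (cnj (v$0) * q * v$1)"
proof -
  have e: "cnj x * c * y + cnj y * cnj c * x = 2 * complex_of_real (Re (cnj x * c * y))" for x y c
    by (simp add: complex_eq_iff algebra_simps)
  have f: "cnj x * complex_of_real c * x = complex_of_real (c * (cmod x)^2)" for x c
  proof -
    have "cnj x * complex_of_real c * x = complex_of_real c * (x * cnj x)" by (simp add: algebra_simps)
    also have "\<dots> = complex_of_real (c * (cmod x)^2)" unfolding cnjsq of_real_mult ..
    finally show ?thesis .
  qed
  have "(\<Sum>i\<in>UNIV. \<Sum>j\<in>UNIV. cnj (v$i) * mk2 p q r$i$j * v$j)
      = cnj (v$0) * complex_of_real p * v$0 + cnj (v$1) * complex_of_real r * v$1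
        + (cnj (v$0) * q * v$1 + cnj (v$1) * cnj q * v$0)"
    apply (simp only: sum2 mk2_nth)
    apply (simp add: add_ac)
    done
  also have "\<dots> = complex_of_real (p * (cmod (v$0))^2 + r * (cmod (v$1))^2 + 2 * Re (cnj (v$0) * q * v$1))"
    unfolding e f by simp
  finally show ?thesis by (simp only: Re_complex_of_real)
qed

lemma psd_mk2: "psd (mk2 p q r) \<longleftrightarrow> 0 \<le> p \<and> 0 \<le> r \<and> (cmod q)^2 \<le> p * r"
proof
  assume "psd (mk2 p q r)"
  then have Q: "0 \<le> p * (cmod (v$0))^2 + r * (cmod (v$1))^2 + 2 * Re (cnj (v$0) * q * v$1)" for v :: "complex^2"
    unfolding psd_def qf_mk2 by blast
  have p: "0 \<le> p" using Q[of "vec2 1 0"] by simp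
  have r: "0 \<le> r" using Q[of "vec2 0 1"] by simp
  have z: "0 \<le> p * (cmod q)^2 * z^2 + r - 2 * (cmod q)^2 * z" for z :: real
  proof -
    have a: "Re (cnj (q * complex_of_real z) * q * (-1)) = - ((cmod q)^2 * z)"
    proof -
      have "cnj (q * complex_of_real z) * q * (-1) = - complex_of_real z * (q * cnj q)" by (simp add: algebra_simps)
      also have "\<dots> = complex_of_real (- ((cmod q)^2 * z))" unfolding cnjsq by simp
      finally show ?thesis by (simp only: Re_complex_of_real)
    qed
    have b: "(cmod (q * complex_of_real z))^2 = (cmod q)^2 * z^2"
      by (simp add: norm_mult power_mult_distrib)
    have "0 \<le> p * (cmod (q * complex_of_real z))^2 + r * (cmod (-1::complex))^2 + 2 * Re (cnj (q * complex_of_real z) * q * (-1))"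
      using Q[of "vec2 (q * complex_of_real z) (-1)"] by simp
    then show ?thesis unfolding a b by simp
  qed
  define n where "n = (cmod q)^2"
  have n: "0 \<le> n" by (simp add: n_def)
  have "n \<le> p * r"
  proof (cases "n = 0")
    case True then show ?thesis using p r by simp
  next
    case False
    show ?thesis
    proof (cases "p = 0")
      case True
      have "0 \<le> r - 2 * n * ((r+1)/(2*n))" using z[of "(r+1)/(2*n)"] True by (simp add: n_def)
      also have "\<dots> = -1" using False by (simp add: field_simps)
      finally show ?thesis by simp
    next
      case pF: False
      then have pp: "0 < p" using p by simp
      have "0 \<le> p * n * (1/p)^2 + r - 2 * n * (1/p)" using z[of "1/p"] by (simp add: n_def)
      also have "\<dots> = r - n / p" using pF by (simp add: field_simps power2_eq_square)
      finally have "n / p \<le> r" by simp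
      then show ?thesis using pp by (simp add: field_simps mult.commute)
    qed
  qed
  then show "0 \<le> p \<and> 0 \<le> r \<and> (cmod q)^2 \<le> p * r" using p r n_def by simp
next
  assume A: "0 \<le> p \<and> 0 \<le> r \<and> (cmod q)^2 \<le> p * r"
  show "psd (mk2 p q r)" unfolding psd_def qf_mk2
  proof (intro conjI mk2_herm allI)
    fix v :: "complex^2"
    define a where "a = cmod (v$0)"
    define b where "b = cmod (v$1)"
    define n where "n = cmod q"
    have ab: "0 \<le> a" "0 \<le> b" "0 \<le> n" by (simp_all add: a_def b_def n_def)
    have "- (a * n * b) \<le> Re (cnj (v$0) * q * v$1)"
      using abs_Re_le_cmod[of "cnj (v$0) * q * v$1"] by (simp add: norm_mult a_def b_def n_def)
    moreover have "2 * (a * n * b) \<le> p * a^2 + r * b^2"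
    proof (cases "p = 0")
      case True
      then have "n = 0" using A by (simp add: n_def)
      then show ?thesis using A True by simp
    next
      case False
      then have pp: "0 < p" using A by simp
      have "0 \<le> (p*a - n*b)^2 + (p*r - n^2) * b^2" using A by (simp add: n_def)
      also have "\<dots> = p * (p * a^2 + r * b^2 - 2 * (a * n * b))" by (simp add: algebra_simps power2_eq_square)
      finally show ?thesis using pp by (simp add: zero_le_mult_iff)
    qed
    ultimately show "0 \<le> p * (cmod (v$0))^2 + r * (cmod (v$1))^2 + 2 * Re (cnj (v$0) * q * v$1)"
      by (simp add: a_def b_def)
  qed
qed

lemma cnjsq2: "cnj x * x = complex_of_real ((cmod x)^2)" using cnjsq[of x] by (simp add: mult.commute)

lemma mk2_inj: "mk2 a b c = mk2 a' b' c' \<longleftrightarrow> a = a' \<and> b = b' \<and> c = c'"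
proof
  assume "mk2 a b c = mk2 a' b' c'"
  then have "mk2 a b c $0$0 = mk2 a' b' c' $0$0" "mk2 a b c $0$1 = mk2 a' b' c' $0$1"
    "mk2 a b c $1$1 = mk2 a' b' c' $1$1" by simp_all
  then show "a = a' \<and> b = b' \<and> c = c'" by simp
qed simp

lemma sq_mk2: "mk2 p q r ** mk2 p q r = mk2 (p^2 + (cmod q)^2) (q * complex_of_real (p + r)) (r^2 + (cmod q)^2)"
proof (rule mat2_eqI)
  show "(mk2 p q r ** mk2 p q r)$0$0 = mk2 (p^2 + (cmod q)^2) (q * complex_of_real (p + r)) (r^2 + (cmod q)^2)$0$0"
    by (simp add: matrix_matrix_mult_def sum2 cnjsq power2_eq_square)
  show "(mk2 p q r ** mk2 p q r)$0$1 = mk2 (p^2 + (cmod q)^2) (q * complex_of_real (p + r)) (r^2 + (cmod q)^2)$0$1"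
    by (simp add: matrix_matrix_mult_def sum2 algebra_simps)
  show "(mk2 p q r ** mk2 p q r)$1$0 = mk2 (p^2 + (cmod q)^2) (q * complex_of_real (p + r)) (r^2 + (cmod q)^2)$1$0"
    by (simp add: matrix_matrix_mult_def sum2 algebra_simps)
  show "(mk2 p q r ** mk2 p q r)$1$1 = mk2 (p^2 + (cmod q)^2) (q * complex_of_real (p + r)) (r^2 + (cmod q)^2)$1$1"
    by (simp add: matrix_matrix_mult_def sum2 cnjsq2 power2_eq_square)
qed

lemma sqrt2:
  fixes \<alpha> \<delta> :: real and \<beta> :: complex
  assumes A: "0 \<le> \<alpha>" "0 \<le> \<delta>" "(cmod \<beta>)^2 \<le> \<alpha> * \<delta>"
  defines "s \<equiv> sqrt (\<alpha> * \<delta> - (cmod \<beta>)^2)"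
  defines "t \<equiv> sqrt (\<alpha> + \<delta> + 2 * s)"
  defines "S0 \<equiv> mk2 ((\<alpha>+s)/t) (\<beta> / complex_of_real t) ((\<delta>+s)/t)"
  shows "psd S0 \<and> S0 ** S0 = mk2 \<alpha> \<beta> \<delta> \<and> (\<forall>S. psd S \<and> S ** S = mk2 \<alpha> \<beta> \<delta> \<longrightarrow> S = S0)"
proof -
  have nn: "0 \<le> \<alpha> * \<delta> - (cmod \<beta>)^2" using A(3) by linarith
  have s0: "0 \<le> s" unfolding s_def using nn by simp
  have s2: "s^2 = \<alpha> * \<delta> - (cmod \<beta>)^2" unfolding s_def using nn by (rule real_sqrt_pow2)
  have t0: "0 \<le> t" using s0 A by (simp add: t_def)
  have t2: "t^2 = \<alpha> + \<delta> + 2 * s" using s0 A by (simp add: t_def)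
  show ?thesis
  proof (cases "t = 0")
    case True
    then have z: "\<alpha> = 0" "\<delta> = 0" "s = 0" using t2 A s0 by auto
    then have "\<beta> = 0" using A by simp
    then have S0z: "S0 = mk2 0 0 0" and Az: "mk2 \<alpha> \<beta> \<delta> = mk2 0 0 0" using True z by (simp_all add: S0_def)
    have uniq: "S = mk2 0 0 0" if "psd S" "S ** S = mk2 0 0 0" for S
    proof -
      define p where "p = Re (S$0$0)"
      define q where "q = S$0$1"
      define r where "r = Re (S$1$1)"
      have S: "S = mk2 p q r" unfolding p_def q_def r_def using herm2 that(1) psd_def by blast
      have P: "0 \<le> p" "0 \<le> r" "(cmod q)^2 \<le> p*r" using that(1) S psd_mk2 by auto
      have "p^2 + (cmod q)^2 = 0" "r^2 + (cmod q)^2 = 0" using that(2) unfolding S sq_mk2 mk2_inj by auto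
      then have "p = 0" "r = 0" "q = 0" by (auto simp: add_nonneg_eq_0_iff)
      then show ?thesis using S by simp
    qed
    show ?thesis unfolding S0z Az using uniq by (simp add: psd_mk2 sq_mk2)
  next
    case False
    then have tp: "0 < t" using t0 by simp
    have psdS0: "psd S0" unfolding S0_def psd_mk2
    proof (intro conjI)
      show "0 \<le> (\<alpha>+s)/t" "0 \<le> (\<delta>+s)/t" using A s0 tp by simp_all
      have "(cmod \<beta>)^2 \<le> (\<alpha>+s)*(\<delta>+s)" using A s0 by (simp add: algebra_simps add_increasing2)
      then have "(cmod \<beta>)^2 / t^2 \<le> (\<alpha>+s)*(\<delta>+s) / t^2" using tp by (simp add: divide_right_mono)
      then show "(cmod (\<beta> / complex_of_real t))^2 \<le> (\<alpha>+s)/t * ((\<delta>+s)/t)"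
        using tp by (simp add: norm_divide power_divide power2_eq_square)
    qed
    have sq: "S0 ** S0 = mk2 \<alpha> \<beta> \<delta>" unfolding S0_def sq_mk2 mk2_inj
    proof (intro conjI)
      have "((\<alpha>+s)/t)^2 + (cmod (\<beta> / complex_of_real t))^2 = ((\<alpha>+s)^2 + (cmod \<beta>)^2) / t^2"
        using tp by (simp add: norm_divide power_divide field_simps)
      also have "(\<alpha>+s)^2 + (cmod \<beta>)^2 = \<alpha> * t^2" unfolding t2 using s2 by (simp add: algebra_simps power2_eq_square)
      finally show "((\<alpha>+s)/t)^2 + (cmod (\<beta> / complex_of_real t))^2 = \<alpha>" using tp by simp
      have "((\<delta>+s)/t)^2 + (cmod (\<beta> / complex_of_real t))^2 = ((\<delta>+s)^2 + (cmod \<beta>)^2) / t^2"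
        using tp by (simp add: norm_divide power_divide field_simps)
      also have "(\<delta>+s)^2 + (cmod \<beta>)^2 = \<delta> * t^2" unfolding t2 using s2 by (simp add: algebra_simps power2_eq_square)
      finally show "((\<delta>+s)/t)^2 + (cmod (\<beta> / complex_of_real t))^2 = \<delta>" using tp by simp
      have "(\<alpha>+s)/t + (\<delta>+s)/t = t^2 / t" unfolding t2 using tp by (simp add: field_simps)
      also have "\<dots> = t" using tp by (simp add: power2_eq_square)
      finally show "\<beta> / complex_of_real t * complex_of_real ((\<alpha>+s)/t + (\<delta>+s)/t) = \<beta>"
        using tp by simp
    qed
    have uniq: "S = S0" if "psd S" "S ** S = mk2 \<alpha> \<beta> \<delta>" for S
    proof -
      define p where "p = Re (S$0$0)"
      define q where "q = S$0$1"
      define r where "r = Re (S$1$1)"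
      have S: "S = mk2 p q r" unfolding p_def q_def r_def using herm2 that(1) psd_def by blast
      have P: "0 \<le> p" "0 \<le> r" "(cmod q)^2 \<le> p*r" using that(1) S psd_mk2 by auto
      have E: "\<alpha> = p^2 + (cmod q)^2" "\<beta> = q * complex_of_real (p + r)" "\<delta> = r^2 + (cmod q)^2"
        using that(2) unfolding S sq_mk2 mk2_inj by auto
      have cb: "(cmod \<beta>)^2 = (cmod q)^2 * (p+r)^2" unfolding E by (simp add: norm_mult power_mult_distrib del: of_real_add)
      have "\<alpha> * \<delta> - (cmod \<beta>)^2 = (p*r - (cmod q)^2)^2" unfolding cb E(1) E(3)
        by (simp add: algebra_simps power2_eq_square)
      then have sv: "s = p*r - (cmod q)^2" unfolding s_def using P by simp
      have "t^2 = (p+r)^2" unfolding t2 sv E(1) E(3) by (simp add: algebra_simps power2_eq_square)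
      then have tv: "t = p + r" using t0 P by (simp add: power2_eq_iff_nonneg)
      have "(\<alpha>+s)/t = p" unfolding tv sv E(1) using tp tv by (simp add: field_simps power2_eq_square)
      moreover have "(\<delta>+s)/t = r" unfolding tv sv E(3) using tp tv by (simp add: field_simps power2_eq_square)
      moreover have "\<beta> / complex_of_real t = q"
      proof -
        have nz: "complex_of_real (p+r) \<noteq> 0" using tp tv by (simp only: of_real_eq_0_iff)
        show ?thesis unfolding E(2) tv using nz by (simp del: of_real_add)
      qed
      ultimately show ?thesis unfolding S S0_def by simp
    qed
    show ?thesis using psdS0 sq uniq by blast
  qed
qed

lemma adjY: fixes Y :: "2 op" shows "adj Y ** Y = mk2 ((cmod (Y$0$0))^2 + (cmod (Y$1$0))^2) (cnj (Y$0$0) * Y$0$1 + cnj (Y$1$0) * Y$1$1) ((cmod (Y$0$1))^2 + (cmod (Y$1$1))^2)"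
  by (rule mat2_eqI) (simp_all add: matrix_matrix_mult_def adj_def sum2 cnjsq2)

lemma det_identity:
  fixes a b c d :: complex
  shows "(a*cnj a + c*cnj c)*(b*cnj b + d*cnj d) = (cnj a*b + cnj c*d)*cnj(cnj a*b + cnj c*d) + (a*d - b*c)*cnj(a*d-b*c)"
  by (simp add: algebra_simps)

lemma trace_norm2: fixes Y :: "2 op" shows "trace_norm Y = sqrt ((cmod (Y$0$0))^2 + (cmod (Y$0$1))^2 + (cmod (Y$1$0))^2 + (cmod (Y$1$1))^2
    + 2 * cmod (Y$0$0 * Y$1$1 - Y$0$1 * Y$1$0))"
proof -
  define a where "a = Y$0$0"
  define b where "b = Y$0$1"
  define c where "c = Y$1$0"
  define d where "d = Y$1$1"
  define \<alpha> where "\<alpha> = (cmod a)^2 + (cmod c)^2"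
  define \<delta> where "\<delta> = (cmod b)^2 + (cmod d)^2"
  define \<beta> where "\<beta> = cnj a * b + cnj c * d"
  have AY: "adj Y ** Y = mk2 \<alpha> \<beta> \<delta>" unfolding adjY \<alpha>_def \<beta>_def \<delta>_def a_def b_def c_def d_def ..
  have ca: "complex_of_real \<alpha> = a*cnj a + c*cnj c" unfolding \<alpha>_def by (simp add: cnjsq)
  have cd: "complex_of_real \<delta> = b*cnj b + d*cnj d" unfolding \<delta>_def by (simp add: cnjsq)
  have "complex_of_real (\<alpha> * \<delta>) = complex_of_real ((cmod \<beta>)^2 + (cmod (a*d - b*c))^2)"
    unfolding of_real_mult of_real_add ca cd cnjsq[symmetric] \<beta>_def by (rule det_identity)
  then have key: "\<alpha> * \<delta> = (cmod \<beta>)^2 + (cmod (a*d - b*c))^2" by (simp only: of_real_eq_iff)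
  have A: "0 \<le> \<alpha>" "0 \<le> \<delta>" "(cmod \<beta>)^2 \<le> \<alpha> * \<delta>" unfolding key by (simp_all add: \<alpha>_def \<delta>_def)
  define s where "s = sqrt (\<alpha> * \<delta> - (cmod \<beta>)^2)"
  define t where "t = sqrt (\<alpha> + \<delta> + 2 * s)"
  define S0 where "S0 = mk2 ((\<alpha>+s)/t) (\<beta> / complex_of_real t) ((\<delta>+s)/t)"
  have R: "psd S0 \<and> S0 ** S0 = mk2 \<alpha> \<beta> \<delta> \<and> (\<forall>S. psd S \<and> S ** S = mk2 \<alpha> \<beta> \<delta> \<longrightarrow> S = S0)"
    unfolding S0_def t_def s_def using sqrt2[OF A] by blast
  have abs: "abs_op Y = S0" unfolding abs_op_def AY
    by (rule the_equality) (use R in auto)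
  have sv: "s = cmod (a*d - b*c)" unfolding s_def key by simp
  have s0: "0 \<le> s" unfolding sv by simp
  have t0: "0 \<le> t" using s0 A by (simp add: t_def)
  have t2: "t^2 = \<alpha> + \<delta> + 2 * s" using s0 A by (simp add: t_def)
  have "trace_norm Y = (\<alpha>+s)/t + (\<delta>+s)/t"
    unfolding trace_norm_def abs S0_def trace_def sum2 by simp
  also have "\<dots> = t^2 / t" unfolding t2 by (simp add: add_divide_distrib)
  also have "\<dots> = t" by (simp add: power2_eq_square)
  finally show ?thesis unfolding t_def sv \<alpha>_def \<delta>_def a_def b_def c_def d_def by (simp add: algebra_simps)
qed

lemma trace_norm_lower: fixes Y :: "2 op" shows "Re (Y$0$0) - Re (Y$1$1) \<le> trace_norm Y"
proof -
  define a where "a = Y$0$0"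
  define b where "b = Y$0$1"
  define c where "c = Y$1$0"
  define d where "d = Y$1$1"
  have h1: "\<bar>Re a - Re d\<bar> \<le> cmod a + cmod d" using abs_Re_le_cmod[of a] abs_Re_le_cmod[of d] by linarith
  have h2: "cmod a * cmod d \<le> cmod (a*d - b*c) + cmod b * cmod c"
  proof -
    have "cmod (a*d) \<le> cmod (a*d - b*c) + cmod (b*c)" using norm_triangle_ineq[of "a*d - b*c" "b*c"] by simp
    then show ?thesis by (simp add: norm_mult)
  qed
  have h3: "2 * (cmod b * cmod c) \<le> (cmod b)^2 + (cmod c)^2"
    using sum_squares_bound[of "cmod b" "cmod c"] by (simp add: algebra_simps)
  have h4: "(Re a - Re d)^2 \<le> (cmod a + cmod d)^2"
    using h1 by (metis abs_le_square_iff abs_of_nonneg add_nonneg_nonneg norm_ge_zero)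
  have "(Re a - Re d)^2 \<le> (cmod a)^2 + (cmod b)^2 + (cmod c)^2 + (cmod d)^2 + 2 * cmod (a*d - b*c)"
    using h2 h3 h4 by (simp add: power2_sum) 
  then have "Re a - Re d \<le> sqrt ((cmod a)^2 + (cmod b)^2 + (cmod c)^2 + (cmod d)^2 + 2 * cmod (a*d - b*c))"
    by (rule real_le_rsqrt)
  then show ?thesis unfolding trace_norm2 a_def b_def c_def d_def .
qed

lemma gibbs_dist: assumes "1 \<le> M" shows "trace_dist (gibbs_battery M) ket1bra1 = 1 - 1/M"
proof -
  define m where "m = 1 - 1/M"
  have m: "0 \<le> m" using assms by (simp add: m_def)
  have e: "(gibbs_battery M - ket1bra1)$0$0 = complex_of_real m"
     "(gibbs_battery M - ket1bra1)$0$1 = 0" "(gibbs_battery M - ket1bra1)$1$0 = 0"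
     "(gibbs_battery M - ket1bra1)$1$1 = - complex_of_real m"
    by (simp_all add: gibbs_battery_def ket1bra1_def m_def)
  have "trace_norm (gibbs_battery M - ket1bra1) = sqrt ((2 * m)^2)"
    unfolding trace_norm2 e using m by (simp add: norm_mult abs_of_nonneg power2_eq_square del: of_real_diff of_real_divide)
  also have "\<dots> = 2 * m" unfolding real_sqrt_abs using m by simp
  finally show ?thesis unfolding trace_dist_def m_def by simp
qed

definition swapU :: "complex^('n::finite \<times> 2)^(2 \<times> 'n)" where
  "swapU = (\<chi> x p. if p = prod.swap x then 1 else 0)"

lemma sum_ind_l: fixes a :: "'a::finite" shows "(\<Sum>z\<in>UNIV. (if z = a then 1 else 0) * f z) = (f a :: complex)"
proof -
  have "(\<Sum>z\<in>UNIV. (if z = a then 1 else 0) * f z) = (\<Sum>z\<in>UNIV. if z = a then f z else 0)"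
    by (rule sum.cong) auto
  then show ?thesis by simp
qed

lemma sum_ind_r: fixes a :: "'a::finite" shows "(\<Sum>z\<in>UNIV. f z * (if z = a then 1 else 0)) = (f a :: complex)"
  using sum_ind_l[of a f] by (simp add: mult.commute)

lemma sum_ind_ls: fixes a :: "'a::finite \<times> 'b::finite" shows "(\<Sum>z\<in>UNIV. (if a = prod.swap z then 1 else 0) * f z) = (f (prod.swap a) :: complex)"
proof -
  have "(\<Sum>z\<in>UNIV. (if a = prod.swap z then 1 else 0) * f z) = (\<Sum>z\<in>UNIV. (if z = prod.swap a then 1 else 0) * f z)"
    by (rule sum.cong) auto
  then show ?thesis using sum_ind_l by simp
qed

lemma sum_ind_rs: fixes a :: "'a::finite \<times> 'b::finite" shows "(\<Sum>z\<in>UNIV. f z * (if a = prod.swap z then 1 else 0)) = (f (prod.swap a) :: complex)"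
  using sum_ind_ls[of a f] by (simp add: mult.commute)

lemma adj_swapU: "adj swapU = (\<chi> p x. if p = prod.swap x then 1 else 0)"
proof -
  have "(p = prod.swap x) = (x = prod.swap p)" for p :: "'n::finite \<times> 2" and x by auto
  then show ?thesis by (simp add: adj_def swapU_def vec_eq_iff)
qed

lemma swapU_left: "swapU ** M = (\<chi> x y. M $ prod.swap x $ y)"
  unfolding matrix_matrix_mult_def swapU_def by (simp only: vec_lambda_beta sum_ind_l)

lemma swapU_right: "M ** swapU = (\<chi> x p. M $ x $ prod.swap p)"
  unfolding matrix_matrix_mult_def swapU_def by (simp only: vec_lambda_beta sum_ind_rs)

lemma adj_swapU_right: "M ** adj swapU = (\<chi> p y. M $ p $ prod.swap y)"
  unfolding matrix_matrix_mult_def adj_swapU by (simp only: vec_lambda_beta sum_ind_r)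

lemma adj_swapU_left: "adj swapU ** M = (\<chi> p y. M $ prod.swap p $ y)"
  unfolding matrix_matrix_mult_def adj_swapU by (simp only: vec_lambda_beta sum_ind_ls)

lemma swapU_unitary: "unitary_mat (swapU :: complex^('n::finite \<times> 2)^(2 \<times> 'n))"
proof -
  have "swapU ** adj swapU = (mat 1 :: complex^(2 \<times> 'n)^(2 \<times> 'n))"
    unfolding swapU_left by (auto simp: adj_swapU mat_def vec_eq_iff)
  moreover have "adj swapU ** swapU = (mat 1 :: complex^('n \<times> 2)^('n \<times> 2))"
    unfolding adj_swapU_left by (auto simp: swapU_def mat_def vec_eq_iff)
  ultimately show ?thesis unfolding unitary_mat_def by simp
qed

lemma thermal_swap:
  fixes HS :: "('n::finite) op" and HB G :: "2 op"
  assumes "hermitian HS" "is_gibbs beta HB G"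
  shows "thermal_operation TYPE(2) TYPE('n) beta HS HB (\<lambda>X. cscale (trace X) G)"
proof -
  have hB: "hermitian HB" using assms(2) unfolding is_gibbs_def by blast
  have energy: "(swapU :: complex^('n \<times> 2)^(2 \<times> 'n)) ** (kron HS (mat 1) + kron (mat 1) HB)
      = (kron HB (mat 1) + kron (mat 1) HS) ** swapU"
    unfolding swapU_left swapU_right
    by (auto simp: vec_eq_iff kron_def mat_def algebra_simps)
  have lam: "cscale (trace X) G = ptrace2 (swapU ** kron X G ** adj swapU)" for X :: "'n op"
    unfolding swapU_left adj_swapU_right
    by (simp add: vec_eq_iff ptrace2_def cscale_def kron_def trace_def sum_distrib_right)
  show ?thesis unfolding thermal_operation_def
    using assms(1) hB assms(2) swapU_unitary energy lam by blast
qed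

lemma scaleR_cscale: "r *\<^sub>R (X :: complex^'n::finite^'m::finite) = cscale (complex_of_real r) X"
  by (simp add: vec_eq_iff cscale_def of_real_def)

lemma clin_zero: assumes "clinear_op L" shows "L 0 = 0"
proof -
  have "L (0 + 0) = L 0 + L 0" using assms unfolding clinear_op_def by blast
  then show ?thesis by simp
qed

lemma clin_sum:
  assumes "clinear_op L" "finite S"
  shows "L (\<Sum>v\<in>S. u v *\<^sub>R v) = (\<Sum>v\<in>S. u v *\<^sub>R L v)"
  using assms(2)
proof (induction S rule: finite_induct)
  case empty then show ?case using clin_zero[OF assms(1)] by simp
next
  case (insert x F)
  have "L (\<Sum>v\<in>insert x F. u v *\<^sub>R v) = L (u x *\<^sub>R x + (\<Sum>v\<in>F. u v *\<^sub>R v))" using insert by simp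
  also have "\<dots> = L (u x *\<^sub>R x) + L (\<Sum>v\<in>F. u v *\<^sub>R v)" using assms(1) unfolding clinear_op_def by blast
  also have "L (u x *\<^sub>R x) = u x *\<^sub>R L x" using assms(1) unfolding clinear_op_def scaleR_cscale by blast
  finally show ?case using insert by simp
qed

definition fre :: "2 op \<Rightarrow> real" where "fre Y = Re (Y$0$0) - Re (Y$1$1)"

lemma fre_sum: "finite S \<Longrightarrow> fre (\<Sum>v\<in>S. u v *\<^sub>R Y v) = (\<Sum>v\<in>S. u v * fre (Y v))"
  by (induction S rule: finite_induct) (simp_all add: fre_def algebra_simps)

lemma conv_suff:
  fixes P E :: "('n::finite) op set"
  assumes "1 \<le> M" "1 - 1/M \<le> eps" "P \<subseteq> density" "E \<subseteq> density"
  shows "converts P E eps M (\<lambda>X. cscale (trace X) (gibbs_battery M))"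
proof -
  have lin: "clinear_op (\<lambda>X::'n op. cscale (trace X) (gibbs_battery M))"
    unfolding clinear_op_def
    by (simp add: vec_eq_iff cscale_def trace_def sum.distrib sum_distrib_left algebra_simps)
  have tr1: "trace X = 1" if "X \<in> P \<union> E" for X using that assms(3,4) unfolding density_def by auto
  have cs1: "cscale 1 G = G" for G :: "2 op" by (simp add: vec_eq_iff cscale_def)
  show ?thesis unfolding converts_def
    using lin tr1 cs1 gibbs_dist[OF assms(1)] assms(2) by auto
qed

lemma conv_nec:
  fixes P E :: "('n::finite) op set"
  assumes "1 < M" "converts P E eps M L" "convex hull P \<inter> affine hull E \<noteq> {}"
  shows "1 - 1/M \<le> eps"
proof -
  have lin: "clinear_op L" and cP: "\<forall>\<rho>\<in>P. trace_dist (L \<rho>) ket1bra1 \<le> eps"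
    and cE: "\<forall>\<tau>\<in>E. L \<tau> = gibbs_battery M" using assms(2) unfolding converts_def by auto
  obtain x where x: "x \<in> convex hull P" "x \<in> affine hull E" using assms(3) by blast
  obtain S1 u where S1: "finite S1" "S1 \<subseteq> P" "\<forall>v\<in>S1. 0 \<le> u v" "sum u S1 = 1" "(\<Sum>v\<in>S1. u v *\<^sub>R v) = x"
    using x(1) unfolding convex_hull_explicit by blast
  obtain S2 w where S2: "finite S2" "S2 \<subseteq> E" "sum w S2 = 1" "(\<Sum>v\<in>S2. w v *\<^sub>R v) = x"
    using x(2) unfolding affine_hull_explicit by blast
  define F where "F X = fre (L X)" for X
  have FE: "F v = 1 - 2/M" if "v \<in> E" for v
    using cE that by (simp add: F_def fre_def gibbs_battery_def)
  have FP: "F v \<le> 2 * eps - 1" if "v \<in> P" for v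
  proof -
    have "fre (L v - ket1bra1) \<le> trace_norm (L v - ket1bra1)" unfolding fre_def by (rule trace_norm_lower)
    also have "\<dots> \<le> 2 * eps" using cP that unfolding trace_dist_def by fastforce
    finally show ?thesis by (simp add: F_def fre_def ket1bra1_def)
  qed
  have "F x = (\<Sum>v\<in>S2. w v * F v)" unfolding F_def S2(4)[symmetric] clin_sum[OF lin S2(1)] fre_sum[OF S2(1)] ..
  also have "\<dots> = (\<Sum>v\<in>S2. w v * (1 - 2/M))" using FE S2(2) by (intro sum.cong) auto
  also have "\<dots> = 1 - 2/M" using S2(3) by (simp add: sum_distrib_right[symmetric])
  finally have Fx1: "F x = 1 - 2/M" .
  have "F x = (\<Sum>v\<in>S1. u v * F v)" unfolding F_def S1(5)[symmetric] clin_sum[OF lin S1(1)] fre_sum[OF S1(1)] ..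
  also have "\<dots> \<le> (\<Sum>v\<in>S1. u v * (2 * eps - 1))" using FP S1(2,3) by (intro sum_mono mult_left_mono) auto
  also have "\<dots> = 2 * eps - 1" using S1(4) by (simp add: sum_distrib_right[symmetric])
  finally have "1 - 2/M \<le> 2 * eps - 1" using Fx1 by simp
  then show ?thesis by (simp add: field_simps)
qed

theorem corollary2:
  fixes P E :: "('n::finite) op set" and eps :: real
  assumes eps: "0 \<le> eps" "eps < 1"
    and PE: "P \<subseteq> density" "E \<subseteq> density"
    and inter: "convex hull P \<inter> affine hull E \<noteq> {}"
  shows "(\<forall>M>1. (\<exists>L. converts P E eps M L) \<longleftrightarrow> eps \<ge> 1 - 1 / M)
       \<and> ((\<exists>M>1. \<exists>L. converts P E eps M L) \<longrightarrow>
            1 / (1 - eps) > 1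
          \<and> converts P E eps (1 / (1 - eps)) (\<lambda>X. cscale (trace X) (gibbs_battery (1 / (1 - eps))))
          \<and> (\<forall>M>1. (\<exists>L. converts P E eps M L) \<longrightarrow> M \<le> 1 / (1 - eps))
          \<and> (\<forall>beta>0. \<forall>(HS::'n op) (HB::2 op). hermitian HS \<and> is_gibbs beta HB (gibbs_battery (1 / (1 - eps)))
               \<longrightarrow> thermal_operation TYPE(2) TYPE('n) beta HS HB
                     (\<lambda>X. cscale (trace X) (gibbs_battery (1 / (1 - eps))))))"
proof (intro conjI allI impI)
  fix M :: real assume M: "1 < M"
  show "(\<exists>L. converts P E eps M L) \<longleftrightarrow> eps \<ge> 1 - 1 / M"
    using conv_nec[OF M _ inter] conv_suff[of M eps P E] M PE by auto
next
  assume "\<exists>M>1. \<exists>L. converts P E eps M L"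
  then obtain M L where M: "1 < M" "converts P E eps M L" by blast
  have "1 - 1/M \<le> eps" using conv_nec[OF M inter] .
  moreover have "0 < 1 - 1/M" using M by simp
  ultimately have ep: "0 < eps" by linarith
  show g1: "1 / (1 - eps) > 1" using ep eps by (simp add: field_simps)
  show "converts P E eps (1 / (1 - eps)) (\<lambda>X. cscale (trace X) (gibbs_battery (1 / (1 - eps))))"
    using conv_suff[of "1 / (1 - eps)" eps P E] g1 PE eps by simp
next
  fix M :: real assume M: "1 < M" and "\<exists>L. converts P E eps M L"
  then obtain L where "converts P E eps M L" by blast
  then have "1 - 1/M \<le> eps" using conv_nec[OF M _ inter] by blast
  then show "M \<le> 1 / (1 - eps)" using M eps by (simp add: field_simps)
next
  fix beta :: real and HS :: "'n op" and HB :: "2 op"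
  assume "0 < beta" "hermitian HS \<and> is_gibbs beta HB (gibbs_battery (1 / (1 - eps)))"
  then show "thermal_operation TYPE(2) TYPE('n) beta HS HB (\<lambda>X. cscale (trace X) (gibbs_battery (1 / (1 - eps))))"
    using thermal_swap by blast
qed

end
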